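(* In the setting below, for $1\le i,j\le r$ the block $N[i,j]$ of $N=\lim_{t\to\infty}(S+tP)^{-1}$ equals $$c_{ij}\begin{pmatrix}\mathbf{1}_{p_i}\mathbf{1}_{p_j}^\top&-\mathbf{1}_{p_i}\mathbf{1}_{q_j}^\top\\-\mathbf{1}_{q_i}\mathbf{1}_{p_j}^\top&\mathbf{1}_{q_i}\mathbf{1}_{q_j}^\top\end{pmatrix}$$ with $$c_{ii}=\frac{\ell}{\alpha(\alpha+\ell\gamma)(p_i+q_i)}\left(\frac\alpha\ell+\gamma-\frac{(p_i-q_i)^2}{p_i+q_i}\right),\qquad c_{ij}=\frac{-\ell}{\alpha(\alpha+\ell\gamma)}\cdot\frac{p_i-q_i}{p_i+q_i}\cdot\frac{p_j-q_j}{p_j+q_j}\ \ (j\ne i).$$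
   Context: Let $n\ge3$, $\ell>0$, $\alpha\ge(n-2)\ell$, $S=\alpha I_n+\ell\mathbf{1}_n\mathbf{1}_n^\top$. For a real matrix $P$, $\Delta_i(P)=|P_{ii}|-\sum_{j\ne i}|P_{ij}|$. A signless Laplacian is a real symmetric $n\times n$ matrix $P$ with $P_{ij}\in\{0,1\}$ for $i\ne j$, $P_{ii}\ge0$, and $\Delta_i(P)\in\{0,2\}$ for all $i$; its graph $G$ has vertex set $\{1,\dots,n\}$, an edge $\{i,j\}$ ($i\ne j$) whenever $P_{ij}=1$, and a self-loop $\{i,i\}$ whenever $\Delta_i(P)=2$ (graphs with self-loops are not bipartite). Let $G_1,\dots,G_r$ be the bipartite connected components of $G$, $G_i$ having bipartition classes of sizes $p_i$ and $q_i$; order the vertices of each $G_i$ with the $p_i$-class first. $N[i,j]$ denotes the submatrix of $N$ with rows indexed by vertices of $G_i$ and columns by vertices of $G_j$. $\gamma=\sum_{i=1}^r\frac{(p_i-q_i)^2}{p_i+q_i}$. *)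

theory Defs
  imports "HOL-Analysis.Analysis"
begin

definition Delta :: "real^'n^'n \<Rightarrow> 'n \<Rightarrow> real" where
  "Delta P i = \<bar>P$i$i\<bar> - (\<Sum>j\<in>UNIV - {i}. \<bar>P$i$j\<bar>)"

definition signless_laplacian :: "real^'n^'n \<Rightarrow> bool" where
  "signless_laplacian P \<longleftrightarrow> transpose P = P
     \<and> (\<forall>i j. i \<noteq> j \<longrightarrow> P$i$j \<in> {0, 1})
     \<and> (\<forall>i. P$i$i \<ge> 0)
     \<and> (\<forall>i. Delta P i \<in> {0, 2})"

definition graph_edge :: "real^'n^'n \<Rightarrow> 'n \<Rightarrow> 'n \<Rightarrow> bool" where
  "graph_edge P i j \<longleftrightarrow> i \<noteq> j \<and> P$i$j = 1"

definition self_loop :: "real^'n^'n \<Rightarrow> 'n \<Rightarrow> bool" where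
  "self_loop P i \<longleftrightarrow> Delta P i = 2"

definition conn_comp :: "real^'n^'n \<Rightarrow> 'n set \<Rightarrow> bool" where
  "conn_comp P C \<longleftrightarrow> (\<exists>v. C = {u. (graph_edge P)\<^sup>*\<^sup>* v u})"

definition is_bipartition :: "real^'n^'n \<Rightarrow> 'n set \<Rightarrow> 'n set \<Rightarrow> 'n set \<Rightarrow> bool" where
  "is_bipartition P C A B \<longleftrightarrow> A \<union> B = C \<and> A \<inter> B = {}
     \<and> (\<forall>u\<in>C. \<forall>v\<in>C. graph_edge P u v \<longrightarrow> (u \<in> A \<longleftrightarrow> v \<in> B))"

definition bipartite_comp :: "real^'n^'n \<Rightarrow> 'n set \<Rightarrow> bool" where
  "bipartite_comp P C \<longleftrightarrow> conn_comp P C \<and> (\<forall>v\<in>C. \<not> self_loop P v)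
     \<and> (\<exists>A B. is_bipartition P C A B)"

end

theory Submission
  imports Defs
begin


lemma inner_vec_real: "(x::real^'n) \<bullet> y = (\<Sum>i\<in>UNIV. x$i * y$i)"
  by (simp add: inner_vec_def)

lemma matrix_inv_props:
  fixes M :: "real^'n^'n"
  assumes "invertible M"
  shows "M ** matrix_inv M = mat 1" "matrix_inv M ** M = mat 1"
proof -
  have "\<exists>A'. M ** A' = mat 1 \<and> A' ** M = mat 1" using assms by (simp add: invertible_def)
  then have "M ** matrix_inv M = mat 1 \<and> matrix_inv M ** M = mat 1"
    unfolding matrix_inv_def by (rule someI_ex)
  then show "M ** matrix_inv M = mat 1" "matrix_inv M ** M = mat 1" by auto
qed

lemma invertible_from_kernel:
  fixes M :: "real^'n^'n"
  assumes "\<And>x. M *v x = 0 \<Longrightarrow> x = 0"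
  shows "invertible M"
proof -
  have "inj ((*v) M)"
  proof (rule injI)
    fix x y assume "M *v x = M *v y"
    then have "M *v (x - y) = 0" by (simp add: matrix_vector_mult_diff_distrib)
    then show "x = y" using assms[of "x - y"] by simp
  qed
  then show ?thesis using matrix_left_invertible_injective invertible_left_inverse by blast
qed

lemma rtranclp_sym:
  assumes "\<And>a b. R a b \<Longrightarrow> R b a" "R\<^sup>*\<^sup>* x y" shows "R\<^sup>*\<^sup>* y x"
  using assms(2) 
proof induction
  case base then show ?case by simp
next
  case (step y z) then show ?case using assms(1) by (meson converse_rtranclp_into_rtranclp)
qed

locale setting =
  fixes P :: "real^'n^'n" and l \<alpha> :: real and r :: nat and G A B :: "nat \<Rightarrow> 'n set"
  assumes l_pos: "l > 0" and \<alpha>_pos: "\<alpha> > 0" and SL: "signless_laplacian P"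
    and G_inj: "inj_on G {..<r}" and G_comps: "G ` {..<r} = {C. bipartite_comp P C}"
    and G_bip: "\<forall>i<r. is_bipartition P (G i) (A i) (B i)"
begin

abbreviation E where "E \<equiv> graph_edge P"

lemma Psym: "P$i$j = P$j$i"
proof -
  have "transpose P $ i $ j = P $ i $ j" using SL by (simp add: signless_laplacian_def)
  thus ?thesis by (simp add: transpose_def)
qed

lemma Poff: "i \<noteq> j \<Longrightarrow> P$i$j = 0 \<or> P$i$j = 1"
  using SL by (auto simp: signless_laplacian_def)

lemma Pnonneg: "P$i$j \<ge> 0"
proof (cases "i = j")
  case True then show ?thesis using SL by (simp add: signless_laplacian_def)
next
  case False then show ?thesis using Poff[OF False] by auto
qed

lemma Delta_cases: "Delta P i = 0 \<or> Delta P i = 2"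
  using SL by (auto simp: signless_laplacian_def)

lemma Delta_eq: "Delta P i = P$i$i - (\<Sum>j\<in>UNIV-{i}. P$i$j)"
  using Pnonneg by (simp add: Delta_def)

lemma E_sym: "E a b \<Longrightarrow> E b a" by (auto simp: graph_edge_def Psym)

lemma G_comp: "i < r \<Longrightarrow> bipartite_comp P (G i)" using G_comps by auto

lemma G_conn: "i < r \<Longrightarrow> \<exists>v. G i = {u. E\<^sup>*\<^sup>* v u}"
  using G_comp by (auto simp: bipartite_comp_def conn_comp_def)

lemma G_closed: assumes "i < r" "u \<in> G i" "E u w" shows "w \<in> G i"
proof -
  obtain v where v: "G i = {u. E\<^sup>*\<^sup>* v u}" using G_conn assms(1) by blast
  show ?thesis using assms(2,3) unfolding v by (auto intro: rtranclp.rtrancl_into_rtrancl)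
qed

lemma G_closed': "i < r \<Longrightarrow> w \<in> G i \<Longrightarrow> E u w \<Longrightarrow> u \<in> G i"
  using G_closed E_sym by blast

lemma G_nonempty: "i < r \<Longrightarrow> G i \<noteq> {}"
  using G_conn by blast

lemma G_disj: assumes "i < r" "j < r" "i \<noteq> j" "u \<in> G i" shows "u \<notin> G j"
proof
  assume uj: "u \<in> G j"
  obtain a where a: "G i = {x. E\<^sup>*\<^sup>* a x}" using G_conn assms(1) by blast
  obtain b where b: "G j = {x. E\<^sup>*\<^sup>* b x}" using G_conn assms(2) by blast
  have au: "E\<^sup>*\<^sup>* a u" using assms(4) a by auto
  have bu: "E\<^sup>*\<^sup>* b u" using uj b by auto
  have ab: "E\<^sup>*\<^sup>* a b" using rtranclp_trans[OF au rtranclp_sym[OF E_sym bu]] .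
  have ba: "E\<^sup>*\<^sup>* b a" using rtranclp_sym[OF E_sym ab] .
  have "{x. E\<^sup>*\<^sup>* a x} = {x. E\<^sup>*\<^sup>* b x}"
  proof (rule Collect_cong)
    fix x show "E\<^sup>*\<^sup>* a x \<longleftrightarrow> E\<^sup>*\<^sup>* b x"
      using rtranclp_trans[OF ab, of x] rtranclp_trans[OF ba, of x] by blast
  qed
  then have "G i = G j" unfolding a b .
  then show False using G_inj assms(1-3) by (auto simp: inj_on_def)
qed

lemma no_loop: "i < r \<Longrightarrow> u \<in> G i \<Longrightarrow> Delta P u = 0"
  using G_comp Delta_cases[of u] by (auto simp: bipartite_comp_def self_loop_def)

lemma bip: "i < r \<Longrightarrow> A i \<union> B i = G i \<and> A i \<inter> B i = {}
   \<and> (\<forall>u\<in>G i. \<forall>v\<in>G i. E u v \<longrightarrow> (u \<in> A i \<longleftrightarrow> v \<in> B i))"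
  using G_bip by (auto simp: is_bipartition_def)

definition s where "s i u = (if u \<in> A i then 1 else -1 :: real)"

lemma s_flip: assumes "i < r" "u \<in> G i" "E u w" shows "s i w = - s i u"
proof -
  have w: "w \<in> G i" using G_closed assms by blast
  have b: "A i \<union> B i = G i" "A i \<inter> B i = {}" "\<forall>u\<in>G i. \<forall>v\<in>G i. E u v \<longrightarrow> (u \<in> A i \<longleftrightarrow> v \<in> B i)"
    using bip[OF assms(1)] by simp_all
  have uw: "u \<in> A i \<longleftrightarrow> w \<in> B i" using b(3) assms(2,3) w by blast
  show ?thesis
  proof (cases "u \<in> A i")
    case True
    then have "w \<notin> A i" using uw b(2) by blast
    then show ?thesis using True by (simp add: s_def)
  next
    case False
    then have "w \<in> A i" using uw b(1) w by blast
    then show ?thesis using False by (simp add: s_def)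
  qed
qed

lemma s_sq: "s i u * s i u = 1" by (simp add: s_def)

definition k where "k i = (\<chi> u. if u \<in> G i then s i u else 0)"
definition ones :: "real^'n" where "ones = (\<chi> u. 1)"
definition m where "m i = real (card (A i)) + real (card (B i))"
definition wt where "wt i = real (card (A i)) - real (card (B i))"

lemma m_card: assumes "i < r" shows "m i = real (card (G i))"
proof -
  have "card (A i \<union> B i) = card (A i) + card (B i)"
    by (rule card_Un_disjoint) (use bip[OF assms] in auto)
  then have "card (G i) = card (A i) + card (B i)" using bip[OF assms] by simp
  then show ?thesis by (simp add: m_def)
qed

lemma m_pos: "i < r \<Longrightarrow> m i > 0"
  using m_card G_nonempty by (simp add: card_gt_0_iff)

lemma kk: assumes "i < r" "j < r" shows "k i \<bullet> k j = (if i = j then m i else 0)"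
proof (cases "i = j")
  case True
  have "k i \<bullet> k j = (\<Sum>u\<in>UNIV. if u \<in> G i then 1 else 0)"
    unfolding inner_vec_real k_def using True by (intro sum.cong) (auto simp: s_sq)
  also have "\<dots> = real (card (G i))" by (simp add: sum.If_cases)
  finally show ?thesis using True m_card assms by simp
next
  case False
  have h: "\<And>u. (if u \<in> G i then s i u else 0) * (if u \<in> G j then s j u else 0) = 0"
    using G_disj[OF assms False] by auto
  show ?thesis using False unfolding inner_vec_real k_def by (simp only: vec_lambda_beta h sum.neutral_const) simp
qed

lemma k_ones: assumes "i < r" shows "k i \<bullet> ones = wt i"
proof -
  have "k i \<bullet> ones = (\<Sum>u\<in>UNIV. if u \<in> G i then s i u else 0)"
    unfolding inner_vec_real k_def ones_def by simp
  also have "\<dots> = (\<Sum>u\<in>G i. s i u)" by (simp add: sum.If_cases)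
  also have "\<dots> = (\<Sum>u\<in>A i \<union> B i. s i u)" using bip[OF assms] by simp
  also have "\<dots> = (\<Sum>u\<in>A i. s i u) + (\<Sum>u\<in>B i. s i u)"
    by (rule sum.union_disjoint) (use bip[OF assms] in auto)
  also have "\<dots> = (\<Sum>u\<in>A i. 1) + (\<Sum>u\<in>B i. -1)"
    using bip[OF assms] by (intro arg_cong2[where f="(+)"] sum.cong) (auto simp: s_def)
  also have "\<dots> = real (card (A i)) - real (card (B i))"
    by simp
  finally show ?thesis by (simp add: wt_def)
qed

definition Q where "Q x = x \<bullet> (P *v x)"
definition P' where "P' u v = (if u = v then 0 else P$u$v)"
definition D where "D u = (\<Sum>v\<in>UNIV. P' u v)"

lemma P'sym: "P' u v = P' v u" by (simp add: P'_def Psym)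
lemma P'_nonneg: "P' u v \<ge> 0" by (simp add: P'_def Pnonneg)
lemma Delta_nonneg: "Delta P u \<ge> 0" using Delta_cases[of u] by auto

lemma Pdiag_eq: "P$u$u = D u + Delta P u"
proof -
  have "D u = P' u u + (\<Sum>v\<in>UNIV-{u}. P' u v)" unfolding D_def by (rule sum.remove) auto
  also have "\<dots> = (\<Sum>v\<in>UNIV-{u}. P$u$v)" by (auto simp: P'_def intro!: sum.cong)
  finally show ?thesis by (simp add: Delta_eq)
qed

lemma Q_expand: "Q x = (\<Sum>u\<in>UNIV. P$u$u * x$u * x$u) + (\<Sum>u\<in>UNIV. \<Sum>v\<in>UNIV. P' u v * x$u * x$v)"
proof -
  have e2: "(\<Sum>v\<in>UNIV. P$u$v * x$v) = (\<Sum>v\<in>UNIV. P' u v * x$v) + P$u$u * x$u" for u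
  proof -
    have "(\<Sum>v\<in>UNIV. P$u$v * x$v) = (\<Sum>v\<in>UNIV. P' u v * x$v + (if v = u then P$u$u * x$u else 0))"
      by (rule sum.cong) (auto simp: P'_def)
    also have "\<dots> = (\<Sum>v\<in>UNIV. P' u v * x$v) + P$u$u * x$u" by (simp add: sum.distrib)
    finally show ?thesis .
  qed
  have "Q x = (\<Sum>u\<in>UNIV. x$u * (\<Sum>v\<in>UNIV. P$u$v * x$v))"
    by (simp add: Q_def inner_vec_real matrix_vector_mult_def)
  also have "\<dots> = (\<Sum>u\<in>UNIV. x$u * ((\<Sum>v\<in>UNIV. P' u v * x$v) + P$u$u * x$u))"
    by (simp only: e2)
  also have "\<dots> = (\<Sum>u\<in>UNIV. P$u$u * x$u * x$u + (\<Sum>v\<in>UNIV. P' u v * x$u * x$v))"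
    by (simp add: algebra_simps sum_distrib_left)
  finally show ?thesis by (simp add: sum.distrib)
qed

lemma Q_identity:
  "2 * Q x = (\<Sum>u\<in>UNIV. \<Sum>v\<in>UNIV. P' u v * (x$u + x$v)^2) + 2 * (\<Sum>u\<in>UNIV. Delta P u * (x$u)^2)"
proof -
  have s1: "(\<Sum>u\<in>UNIV. \<Sum>v\<in>UNIV. P' u v * (x$u + x$v)^2) =
     (\<Sum>u\<in>UNIV. \<Sum>v\<in>UNIV. P' u v * (x$u)^2) + (\<Sum>u\<in>UNIV. \<Sum>v\<in>UNIV. P' u v * (x$v)^2)
     + 2 * (\<Sum>u\<in>UNIV. \<Sum>v\<in>UNIV. P' u v * x$u * x$v)"
    by (simp add: power2_sum algebra_simps sum.distrib sum_distrib_left)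
  have s2: "(\<Sum>u\<in>UNIV. \<Sum>v\<in>UNIV. P' u v * (x$v)^2) = (\<Sum>u\<in>UNIV. \<Sum>v\<in>UNIV. P' u v * (x$u)^2)"
    by (subst sum.swap) (simp add: P'sym)
  have s3: "(\<Sum>u\<in>UNIV. \<Sum>v\<in>UNIV. P' u v * (x$u)^2) = (\<Sum>u\<in>UNIV. D u * (x$u)^2)"
    by (simp add: D_def sum_distrib_right)
  have s4: "(\<Sum>u\<in>UNIV. P$u$u * x$u * x$u) = (\<Sum>u\<in>UNIV. D u * (x$u)^2) + (\<Sum>u\<in>UNIV. Delta P u * (x$u)^2)"
    by (simp add: Pdiag_eq sum.distrib algebra_simps power2_eq_square)
  show ?thesis using s1 s2 s3 s4 Q_expand[of x] by linarith
qed

lemma Q_parts: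
  "(\<Sum>u\<in>UNIV. \<Sum>v\<in>UNIV. P' u v * (x$u + x$v)^2) \<ge> 0" "(\<Sum>u\<in>UNIV. Delta P u * (x$u)^2) \<ge> 0"
  by (auto intro!: sum_nonneg mult_nonneg_nonneg P'_nonneg Delta_nonneg)

lemma Q_nonneg: "Q x \<ge> 0" using Q_identity[of x] Q_parts[of x] by linarith

lemma Q_zero_edge: assumes "Q x = 0" "E u v" shows "x$u + x$v = 0"
proof -
  have z: "(\<Sum>u\<in>UNIV. \<Sum>v\<in>UNIV. P' u v * (x$u + x$v)^2) = 0"
    using Q_identity[of x] Q_parts[of x] assms(1) by linarith
  have "(\<Sum>v\<in>UNIV. P' u v * (x$u + x$v)^2) = 0"
    using z by (subst (asm) sum_nonneg_eq_0_iff) (auto intro!: sum_nonneg mult_nonneg_nonneg P'_nonneg)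
  then have "P' u v * (x$u + x$v)^2 = 0"
    by (subst (asm) sum_nonneg_eq_0_iff) (auto intro!: mult_nonneg_nonneg P'_nonneg)
  moreover have "P' u v = 1" using assms(2) by (simp add: P'_def graph_edge_def)
  ultimately show ?thesis by simp
qed

lemma Q_zero_loop: assumes "Q x = 0" "self_loop P u" shows "x$u = 0"
proof -
  have z: "(\<Sum>u\<in>UNIV. Delta P u * (x$u)^2) = 0"
    using Q_identity[of x] Q_parts[of x] assms(1) by linarith
  then have "Delta P u * (x$u)^2 = 0"
    by (subst (asm) sum_nonneg_eq_0_iff) (auto intro!: mult_nonneg_nonneg Delta_nonneg)
  moreover have "Delta P u = 2" using assms(2) by (simp add: self_loop_def)
  ultimately show ?thesis by simp
qed

lemma kernel: assumes "Q x = 0" "\<forall>i<r. k i \<bullet> x = 0" shows "x = 0"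
proof (rule ccontr)
  assume "x \<noteq> 0"
  then obtain u0 where x0: "x$u0 \<noteq> 0" by (auto simp: vec_eq_iff)
  define C where "C = {w. E\<^sup>*\<^sup>* u0 w}"
  have pm: "x$w = x$u0 \<or> x$w = - x$u0" if "E\<^sup>*\<^sup>* u0 w" for w
    using that
  proof (induction rule: rtranclp_induct)
    case base then show ?case by simp
  next
    case (step y z)
    have "x$y + x$z = 0" using Q_zero_edge[OF assms(1) step(2)] .
    with step(3) show ?case by auto
  qed
  have bc: "bipartite_comp P C"
    unfolding bipartite_comp_def
  proof (intro conjI)
    show "conn_comp P C" unfolding conn_comp_def C_def by blast
    show "\<forall>v\<in>C. \<not> self_loop P v"
    proof
      fix v assume "v \<in> C"
      then have "x$v \<noteq> 0" using pm x0 unfolding C_def by fastforce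
      then show "\<not> self_loop P v" using Q_zero_loop[OF assms(1)] by blast
    qed
    show "\<exists>A B. is_bipartition P C A B"
    proof (intro exI)
      show "is_bipartition P C {w\<in>C. x$w = x$u0} {w\<in>C. x$w = - x$u0}"
        unfolding is_bipartition_def
      proof (intro conjI)
        show "{w \<in> C. x $ w = x $ u0} \<union> {w \<in> C. x $ w = - x $ u0} = C"
          using pm unfolding C_def by auto
        show "{w \<in> C. x $ w = x $ u0} \<inter> {w \<in> C. x $ w = - x $ u0} = {}"
          using x0 by auto
        show "\<forall>u\<in>C. \<forall>v\<in>C. E u v \<longrightarrow> (u \<in> {w \<in> C. x $ w = x $ u0}) = (v \<in> {w \<in> C. x $ w = - x $ u0})"
        proof (intro ballI impI)
          fix u v assume uv: "u \<in> C" "v \<in> C" "E u v"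
          have "x$u + x$v = 0" using Q_zero_edge[OF assms(1) uv(3)] .
          then show "(u \<in> {w \<in> C. x $ w = x $ u0}) = (v \<in> {w \<in> C. x $ w = - x $ u0})"
            using uv by auto
        qed
      qed
    qed
  qed
  have "C \<in> G ` {..<r}" using bc G_comps by auto
  then obtain i where i: "i < r" "G i = C" by auto
  have const: "x$w * s i w = x$u0 * s i u0" if "E\<^sup>*\<^sup>* u0 w" for w
    using that
  proof (induction rule: rtranclp_induct)
    case base then show ?case by simp
  next
    case (step y z)
    have yG: "y \<in> G i" using i(2) step(1) C_def by auto
    have "x$y + x$z = 0" using Q_zero_edge[OF assms(1) step(2)] .
    then have xz: "x$z = - x$y" by linarith
    have sz: "s i z = - s i y" using s_flip[OF i(1) yG step(2)] .
    show ?case using step(3) by (simp add: xz sz)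
  qed
  have "k i \<bullet> x = (\<Sum>w\<in>UNIV. if w \<in> G i then s i w * x$w else 0)"
    unfolding inner_vec_real k_def by (auto intro!: sum.cong)
  also have "\<dots> = (\<Sum>w\<in>G i. s i w * x$w)" by (simp add: sum.If_cases)
  also have "\<dots> = (\<Sum>w\<in>G i. x$u0 * s i u0)"
  proof (rule sum.cong)
    fix w assume "w \<in> G i"
    then have "E\<^sup>*\<^sup>* u0 w" using i(2) C_def by auto
    then have "x$w * s i w = x$u0 * s i u0" by (rule const)
    then show "s i w * x$w = x$u0 * s i u0" by (simp only: mult.commute)
  qed simp
  also have "\<dots> = real (card (G i)) * (x$u0 * s i u0)" by simp
  finally have kx: "k i \<bullet> x = real (card (G i)) * (x$u0 * s i u0)" .
  have c0: "real (card (G i)) \<noteq> 0" using G_nonempty[OF i(1)] by simp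
  have s0: "s i u0 \<noteq> 0" by (simp add: s_def)
  have "k i \<bullet> x \<noteq> 0" unfolding kx using c0 s0 x0 by simp
  then show False using assms(2) i(1) by blast
qed

end



lemma mv_sum: "(A::real^'n^'m) *v sum f I = (\<Sum>i\<in>I. A *v f i)"
  by (induction I rule: infinite_finite_induct) (simp_all add: matrix_vector_right_distrib)

context setting begin

definition \<gamma> where "\<gamma> = (\<Sum>a<r. wt a ^ 2 / m a)"
definition Z where "Z = \<alpha> + l * \<gamma>"
definition c where "c i j = (if i = j then
                    l / (\<alpha> * (\<alpha> + l * \<gamma>) * m i) * (\<alpha> / l + \<gamma> - wt i ^ 2 / m i)
                  else
                    (- l) / (\<alpha> * (\<alpha> + l * \<gamma>)) * (wt i / m i) * (wt j / m j))"
definition S :: "real^'n^'n" where "S = \<alpha> *\<^sub>R mat 1 + l *\<^sub>R (\<chi> i j. 1)"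
definition N :: "real^'n^'n" where "N = (\<chi> u v. \<Sum>a<r. \<Sum>b<r. c a b * k a$u * k b$v)"

lemma \<gamma>_nonneg: "\<gamma> \<ge> 0"
  unfolding \<gamma>_def using m_pos by (auto intro!: sum_nonneg divide_nonneg_pos)

lemma Z_pos: "Z > 0" using \<gamma>_nonneg l_pos \<alpha>_pos by (simp add: Z_def add_pos_nonneg)

lemma c_alt: assumes "a < r" "b < r"
  shows "c a b = (if a = b then 1 / (\<alpha> * m b) else 0) - l * wt a * wt b / (\<alpha> * m a * m b * Z)"
proof -
  have ma: "m a > 0" "m b > 0" using m_pos assms by auto
  have Z: "Z > 0" "\<alpha> + l * \<gamma> = Z" using Z_pos by (auto simp: Z_def)
  show ?thesis using ma Z \<alpha>_pos l_pos
    by (auto simp: c_def field_simps power2_eq_square)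
qed

lemma sum_wc: assumes "b < r" shows "(\<Sum>a<r. wt a * c a b) = wt b / (m b * Z)"
proof -
  have mb: "m b > 0" using m_pos assms by auto
  have "(\<Sum>a<r. wt a * c a b) = (\<Sum>a<r. (if a = b then wt b / (\<alpha> * m b) else 0)
          - (l * wt b / (\<alpha> * m b * Z)) * (wt a ^ 2 / m a))"
  proof (rule sum.cong)
    fix a assume "a \<in> {..<r}"
    then have ar: "a < r" by simp
    then have ma: "m a > 0" using m_pos by auto
    show "wt a * c a b = (if a = b then wt b / (\<alpha> * m b) else 0)
          - (l * wt b / (\<alpha> * m b * Z)) * (wt a ^ 2 / m a)"
      unfolding c_alt[OF ar assms] using mb ma Z_pos \<alpha>_pos
      by (cases "a = b") (simp_all add: field_simps power2_eq_square)
  qed simp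
  also have "\<dots> = (\<Sum>a<r. (if a = b then wt b / (\<alpha> * m b) else 0))
          - (l * wt b / (\<alpha> * m b * Z)) * (\<Sum>a<r. wt a ^ 2 / m a)"
    by (simp only: sum_subtractf sum_distrib_left)
  also have "\<dots> = wt b / (\<alpha> * m b) - (l * wt b / (\<alpha> * m b * Z)) * \<gamma>"
    using assms unfolding \<gamma>_def by simp
  also have "\<dots> = wt b * (Z - l * \<gamma>) / (\<alpha> * m b * Z)"
    using mb Z_pos \<alpha>_pos by (simp add: field_simps)
  also have "Z - l * \<gamma> = \<alpha>" by (simp add: Z_def)
  also have "wt b * \<alpha> / (\<alpha> * m b * Z) = wt b / (m b * Z)"
    using \<alpha>_pos by simp
  finally show ?thesis .
qed

lemma alg: assumes "j < r" "b < r"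
  shows "\<alpha> * m j * c j b + l * wt j * (\<Sum>a<r. wt a * c a b) = (if j = b then 1 else 0)"
proof -
  have m: "m j > 0" "m b > 0" using m_pos assms by auto
  show ?thesis unfolding c_alt[OF assms] sum_wc[OF assms(2)] using m Z_pos \<alpha>_pos
    by (cases "j = b") (simp_all add: field_simps)
qed

lemma S_mult: "S *v y = \<alpha> *\<^sub>R y + (l * (ones \<bullet> y)) *\<^sub>R ones"
proof -
  have "(S *v y) $ u = \<alpha> * y$u + l * (ones \<bullet> y)" for u
  proof -
    have "(S *v y) $ u = (\<Sum>v\<in>UNIV. (if u = v then \<alpha> * y$v else 0) + l * y$v)"
      by (auto simp: S_def matrix_vector_mult_def mat_def algebra_simps intro!: sum.cong)
    also have "\<dots> = \<alpha> * y$u + l * (\<Sum>v\<in>UNIV. y$v)"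
      by (simp add: sum.distrib sum_distrib_left)
    finally show ?thesis by (simp add: inner_vec_real ones_def)
  qed
  then show ?thesis by (simp add: vec_eq_iff ones_def)
qed

lemma N_mult: "N *v z = (\<Sum>a<r. \<Sum>b<r. (c a b * (k b \<bullet> z)) *\<^sub>R k a)"
proof -
  have "(N *v z) $ u = (\<Sum>a<r. \<Sum>b<r. c a b * (k b \<bullet> z) * k a $ u)" for u
  proof -
    have "(N *v z) $ u = (\<Sum>v\<in>UNIV. \<Sum>a<r. \<Sum>b<r. c a b * k a$u * k b$v * z$v)"
      by (simp add: N_def matrix_vector_mult_def sum_distrib_right)
    also have "\<dots> = (\<Sum>a<r. \<Sum>v\<in>UNIV. \<Sum>b<r. c a b * k a$u * k b$v * z$v)"
      by (rule sum.swap)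
    also have "\<dots> = (\<Sum>a<r. \<Sum>b<r. \<Sum>v\<in>UNIV. c a b * k a$u * k b$v * z$v)"
      by (rule sum.cong[OF refl], rule sum.swap)
    also have "\<dots> = (\<Sum>a<r. \<Sum>b<r. c a b * (k b \<bullet> z) * k a $ u)"
      by (simp add: inner_vec_real sum_distrib_left algebra_simps)
    finally show ?thesis .
  qed
  then show ?thesis by (simp add: vec_eq_iff sum_component)
qed

lemma kSN: assumes "j < r" shows "k j \<bullet> (S *v (N *v z)) = k j \<bullet> z"
proof -
  have y1: "k j \<bullet> (N *v z) = (\<Sum>b<r. m j * c j b * (k b \<bullet> z))"
  proof -
    have "k j \<bullet> (N *v z) = (\<Sum>a<r. \<Sum>b<r. c a b * (k b \<bullet> z) * (if j = a then m j else 0))"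
      using assms by (simp add: N_mult inner_sum_right kk)
    also have "\<dots> = (\<Sum>a<r. if j = a then (\<Sum>b<r. c j b * (k b \<bullet> z) * m j) else 0)"
      by (rule sum.cong) auto
    also have "\<dots> = (\<Sum>b<r. m j * c j b * (k b \<bullet> z))"
      using assms by (simp add: algebra_simps)
    finally show ?thesis .
  qed
  have y2: "ones \<bullet> (N *v z) = (\<Sum>b<r. (\<Sum>a<r. wt a * c a b) * (k b \<bullet> z))"
  proof -
    have "ones \<bullet> (N *v z) = (\<Sum>a<r. \<Sum>b<r. c a b * (k b \<bullet> z) * wt a)"
      by (simp add: N_mult inner_sum_right inner_commute[of ones] k_ones)
    also have "\<dots> = (\<Sum>b<r. \<Sum>a<r. c a b * (k b \<bullet> z) * wt a)" by (rule sum.swap)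
    also have "\<dots> = (\<Sum>b<r. (\<Sum>a<r. wt a * c a b) * (k b \<bullet> z))"
      by (simp add: sum_distrib_left sum_distrib_right algebra_simps)
    finally show ?thesis .
  qed
  have "k j \<bullet> (S *v (N *v z)) = \<alpha> * (k j \<bullet> (N *v z)) + l * (ones \<bullet> (N *v z)) * wt j"
    using assms by (simp add: S_mult k_ones inner_add_right inner_scaleR_right)
  also have "\<dots> = (\<Sum>b<r. (\<alpha> * m j * c j b + l * wt j * (\<Sum>a<r. wt a * c a b)) * (k b \<bullet> z))"
    by (simp add: y1 y2 sum_distrib_left sum_distrib_right sum.distrib algebra_simps)
  also have "\<dots> = (\<Sum>b<r. (if j = b then k b \<bullet> z else 0))"
    using alg[OF assms] by (intro sum.cong) auto
  also have "\<dots> = k j \<bullet> z" using assms by simp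
  finally show ?thesis .
qed

end


context setting begin

lemma Pk: assumes "i < r" shows "P *v k i = 0"
proof -
  have "(P *v k i) $ u = 0" for u
  proof (cases "u \<in> G i")
    case uG: True
    have t: "P$u$w * k i $ w = - (P' u w * s i u) + (if w = u then P$u$u * s i u else 0)" for w
    proof (cases "w = u")
      case True then show ?thesis using uG by (simp add: P'_def k_def)
    next
      case wu: False
      show ?thesis
      proof (cases "P$u$w = 0")
        case True then show ?thesis using wu by (simp add: P'_def)
      next
        case nz: False
        then have P1: "P$u$w = 1" using Poff[of u w] wu by auto
        then have e: "E u w" using wu by (simp add: graph_edge_def)
        have "w \<in> G i" using G_closed[OF assms uG e] .
        moreover have "s i w = - s i u" using s_flip[OF assms uG e] .
        ultimately show ?thesis using wu P1 by (simp add: P'_def k_def)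
      qed
    qed
    have "(P *v k i) $ u = (\<Sum>w\<in>UNIV. - (P' u w * s i u) + (if w = u then P$u$u * s i u else 0))"
      by (simp add: matrix_vector_mult_def t)
    also have "\<dots> = - (D u * s i u) + P$u$u * s i u"
      by (simp add: sum.distrib sum_subtractf sum_negf D_def sum_distrib_right)
    also have "\<dots> = s i u * Delta P u" by (simp add: Pdiag_eq algebra_simps)
    also have "\<dots> = 0" using no_loop[OF assms uG] by simp
    finally show ?thesis .
  next
    case uG: False
    have "P$u$w * k i $ w = 0" for w
    proof (cases "w \<in> G i")
      case wG: True
      then have wu: "w \<noteq> u" using uG by auto
      have "P$u$w = 0"
      proof (rule ccontr)
        assume "P$u$w \<noteq> 0"
        then have "P$u$w = 1" using Poff[of u w] wu by auto
        then have "E u w" using wu by (simp add: graph_edge_def)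
        then show False using G_closed'[OF assms wG] uG by blast
      qed
      then show ?thesis by simp
    next
      case False then show ?thesis by (simp add: k_def)
    qed
    then have z: "\<And>w. P$u$w * k i $ w = 0" .
    show ?thesis unfolding matrix_vector_mult_def by (simp only: vec_lambda_beta z sum.neutral_const)
  qed
  then show ?thesis by (simp add: vec_eq_iff)
qed

lemma Psym_inner: "(P *v x) \<bullet> y = x \<bullet> (P *v y)"
proof -
  have h: "P$i$j * x$j * y$i = x$j * (P$j$i * y$i)" for i j by (simp add: Psym[of i j])
  have "(P *v x) \<bullet> y = (\<Sum>i\<in>UNIV. \<Sum>j\<in>UNIV. P$i$j * x$j * y$i)"
    by (simp add: inner_vec_real matrix_vector_mult_def sum_distrib_right)
  also have "\<dots> = (\<Sum>j\<in>UNIV. \<Sum>i\<in>UNIV. P$i$j * x$j * y$i)" by (rule sum.swap)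
  also have "\<dots> = x \<bullet> (P *v y)"
    by (simp add: inner_vec_real matrix_vector_mult_def sum_distrib_left h)
  finally show ?thesis .
qed

lemma PN: "P *v (N *v z) = 0"
  by (simp add: N_mult mv_sum matrix_vector_mult_scaleR Pk)

lemma Mmult: "(S + t *\<^sub>R P) *v x = S *v x + t *\<^sub>R (P *v x)"
  by (simp add: matrix_vector_mult_add_rdistrib scaleR_matrix_vector_assoc)

lemma xSx: "x \<bullet> (S *v x) = \<alpha> * (x \<bullet> x) + l * (ones \<bullet> x)^2"
  by (simp add: S_mult inner_add_right inner_commute power2_eq_square)

lemma xSx_ge: "x \<bullet> (S *v x) \<ge> \<alpha> * (x \<bullet> x)"
  using xSx[of x] l_pos by (simp add: add_increasing2)

lemma M_inv: assumes "t \<ge> 0" shows "invertible (S + t *\<^sub>R P)"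
proof (rule invertible_from_kernel)
  fix x assume "(S + t *\<^sub>R P) *v x = 0"
  then have "x \<bullet> ((S + t *\<^sub>R P) *v x) = 0" by simp
  then have "x \<bullet> (S *v x) + t * Q x = 0" by (simp add: Mmult inner_add_right Q_def)
  moreover have "t * Q x \<ge> 0" using assms Q_nonneg by simp
  ultimately have "\<alpha> * (x \<bullet> x) \<le> 0" using xSx_ge[of x] by linarith
  then have "x \<bullet> x \<le> 0" using \<alpha>_pos by (simp add: mult_le_0_iff)
  then have "x \<bullet> x = 0" using inner_ge_zero[of x] by linarith
  then show "x = 0" by simp
qed

lemma range: assumes "\<forall>j<r. k j \<bullet> e = 0" shows "\<exists>y. P *v y = e"
proof -
  define K :: "real^'n^'n" where "K = (\<chi> u v. \<Sum>i<r. k i$u * k i$v)"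
  define R where "R = P + K"
  have Kmult: "K *v y = (\<Sum>i<r. (k i \<bullet> y) *\<^sub>R k i)" for y
  proof -
    have "(K *v y) $ u = (\<Sum>i<r. (k i \<bullet> y) * k i $ u)" for u
    proof -
      have "(K *v y) $ u = (\<Sum>v\<in>UNIV. \<Sum>i<r. k i$u * k i$v * y$v)"
        by (simp add: K_def matrix_vector_mult_def sum_distrib_right)
      also have "\<dots> = (\<Sum>i<r. \<Sum>v\<in>UNIV. k i$u * k i$v * y$v)" by (rule sum.swap)
      also have "\<dots> = (\<Sum>i<r. (k i \<bullet> y) * k i $ u)"
        by (simp add: inner_vec_real sum_distrib_left sum_distrib_right algebra_simps)
      finally show ?thesis .
    qed
    then show ?thesis by (simp add: vec_eq_iff sum_component)
  qed
  have Rmult: "R *v y = P *v y + (\<Sum>i<r. (k i \<bullet> y) *\<^sub>R k i)" for y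
    by (simp add: R_def matrix_vector_mult_add_rdistrib Kmult)
  have "invertible R"
  proof (rule invertible_from_kernel)
    fix y assume "R *v y = 0"
    then have "y \<bullet> (R *v y) = 0" by simp
    then have h: "Q y + (\<Sum>i<r. (k i \<bullet> y)^2) = 0"
      by (simp add: Rmult inner_add_right inner_sum_right Q_def inner_commute power2_eq_square)
    have s0: "(\<Sum>i<r. (k i \<bullet> y)^2) \<ge> 0" by (simp add: sum_nonneg)
    have q0: "Q y = 0" using h s0 Q_nonneg[of y] by linarith
    have "(\<Sum>i<r. (k i \<bullet> y)^2) = 0" using h q0 by simp
    then have "\<forall>i<r. (k i \<bullet> y)^2 = 0" by (subst (asm) sum_nonneg_eq_0_iff) auto
    then have "\<forall>i<r. k i \<bullet> y = 0" by simp
    then show "y = 0" using kernel q0 by blast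
  qed
  define y where "y = matrix_inv R *v e"
  have Ry: "R *v y = e"
    unfolding y_def by (simp add: matrix_vector_mul_assoc matrix_inv_props(1)[OF \<open>invertible R\<close>])
  have ky: "k j \<bullet> y = 0" if j: "j < r" for j
  proof -
    have "k j \<bullet> (R *v y) = k j \<bullet> (P *v y) + (\<Sum>i<r. (k i \<bullet> y) * (k j \<bullet> k i))"
      by (simp add: Rmult inner_add_right inner_sum_right)
    also have "k j \<bullet> (P *v y) = 0"
      using Psym_inner[of "k j" y] Pk[OF j] by simp
    also have "(\<Sum>i<r. (k i \<bullet> y) * (k j \<bullet> k i)) = (\<Sum>i<r. if i = j then (k j \<bullet> y) * m j else 0)"
      using j by (intro sum.cong) (auto simp: kk)
    also have "\<dots> = (k j \<bullet> y) * m j" using j by simp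
    finally have "(k j \<bullet> y) * m j = 0" using Ry assms j by simp
    then show ?thesis using m_pos[OF j] by simp
  qed
  have "P *v y = e" using Ry by (simp add: Rmult ky)
  then show ?thesis by blast
qed

lemma bound: "\<exists>C\<ge>0. \<forall>t>0. \<forall>u. ((matrix_inv (S + t *\<^sub>R P) *v z - N *v z) $ u)^2 \<le> C / t"
proof -
  define e where "e = z - S *v (N *v z)"
  have "\<forall>j<r. k j \<bullet> e = 0" by (simp add: e_def inner_diff_right kSN)
  then obtain y where y: "P *v y = e" using range by blast
  define C where "C = Q y / (2 * \<alpha>)"
  have C0: "C \<ge> 0" using Q_nonneg \<alpha>_pos by (simp add: C_def)
  have "\<forall>t>0. \<forall>u. ((matrix_inv (S + t *\<^sub>R P) *v z - N *v z) $ u)^2 \<le> C / t"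
  proof (intro allI impI)
    fix t :: real and u assume t: "t > 0"
    define M where "M = S + t *\<^sub>R P"
    define Mi where "Mi = matrix_inv M"
    have inv: "M ** Mi = mat 1" "Mi ** M = mat 1"
      using matrix_inv_props[OF M_inv[of t]] t by (auto simp: M_def Mi_def)
    define x where "x = Mi *v e"
    have Mx: "M *v x = e" unfolding x_def by (simp add: matrix_vector_mul_assoc inv)
    have MN: "M *v (N *v z) = S *v (N *v z)" by (simp add: M_def Mmult PN)
    have "Mi *v (S *v (N *v z)) = Mi *v (M *v (N *v z))" by (simp only: MN)
    also have "\<dots> = (Mi ** M) *v (N *v z)" by (rule matrix_vector_mul_assoc)
    also have "\<dots> = N *v z" by (simp add: inv)
    finally have MiS: "Mi *v (S *v (N *v z)) = N *v z" .
    have xd: "x = Mi *v z - N *v z"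
      by (simp add: x_def e_def matrix_vector_mult_diff_distrib MiS)
    have eq1: "x \<bullet> (S *v x) + t * Q x = x \<bullet> (P *v y)"
    proof -
      have "S *v x + t *\<^sub>R (P *v x) = P *v y" using Mx y by (simp add: M_def Mmult)
      then have "x \<bullet> (S *v x + t *\<^sub>R (P *v x)) = x \<bullet> (P *v y)" by simp
      then show ?thesis by (simp add: inner_add_right Q_def)
    qed
    have yPx: "y \<bullet> (P *v x) = x \<bullet> (P *v y)"
      using Psym_inner[of y x] by (simp add: inner_commute)
    have eq2: "Q (t *\<^sub>R x - y) = t^2 * Q x - 2 * t * (x \<bullet> (P *v y)) + Q y"
      unfolding Q_def using yPx
      by (simp add: matrix_vector_mult_diff_distrib matrix_vector_mult_scaleR inner_diff_left
          inner_diff_right power2_eq_square algebra_simps)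
    have h2: "2 * t * (x \<bullet> (P *v y)) \<le> t^2 * Q x + Q y"
      using eq2 Q_nonneg[of "t *\<^sub>R x - y"] by linarith
    have h1: "\<alpha> * (x \<bullet> x) \<le> x \<bullet> (P *v y) - t * Q x" using eq1 xSx_ge[of x] by linarith
    have "2 * t * (\<alpha> * (x \<bullet> x)) \<le> 2 * t * (x \<bullet> (P *v y) - t * Q x)"
      using h1 t by (intro mult_left_mono) auto
    also have "\<dots> = 2 * t * (x \<bullet> (P *v y)) - 2 * t^2 * Q x" by (simp add: algebra_simps power2_eq_square)
    finally have "2 * t * (\<alpha> * (x \<bullet> x)) \<le> Q y - t^2 * Q x" using h2 by linarith
    moreover have "t^2 * Q x \<ge> 0" using Q_nonneg by simp
    ultimately have h3: "(2 * \<alpha> * t) * (x \<bullet> x) \<le> Q y" by (simp add: algebra_simps)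
    have xx: "x \<bullet> x \<le> C / t"
      using h3 t \<alpha>_pos by (simp add: C_def field_simps)
    have "(x $ u)^2 \<le> x \<bullet> x"
      unfolding inner_vec_real power2_eq_square
      by (rule member_le_sum) auto
    then show "((matrix_inv (S + t *\<^sub>R P) *v z - N *v z) $ u)^2 \<le> C / t"
      using xx xd by (simp add: Mi_def M_def)
  qed
  then show ?thesis using C0 by blast
qed

lemma entry_lim: "((\<lambda>t. matrix_inv (S + t *\<^sub>R P) $ u $ v) \<longlongrightarrow> N $ u $ v) at_top"
proof -
  obtain C where C0: "C \<ge> 0" and C: "\<forall>t>0. \<forall>w. ((matrix_inv (S + t *\<^sub>R P) *v axis v 1 - N *v axis v 1) $ w)^2 \<le> C / t"
    using bound by blast
  have col: "(A *v axis v 1) $ w = A $ w $ v" for A :: "real^'n^'n" and w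
    by (simp add: matrix_vector_mult_basis column_def)
  have le: "\<forall>\<^sub>F t in at_top. norm (matrix_inv (S + t *\<^sub>R P) $ u $ v - N $ u $ v) \<le> sqrt (C / t)"
  proof (rule eventually_at_top_linorderI[of 1])
    fix t :: real assume "t \<ge> 1"
    then have tp: "t > 0" by simp
    have h: "((matrix_inv (S + t *\<^sub>R P) *v axis v 1 - N *v axis v 1) $ u)^2 \<le> C / t"
      using C tp by blast
    have "(matrix_inv (S + t *\<^sub>R P) *v axis v 1 - N *v axis v 1) $ u = matrix_inv (S + t *\<^sub>R P) $ u $ v - N $ u $ v"
      by (simp only: vector_minus_component col)
    then have "(matrix_inv (S + t *\<^sub>R P) $ u $ v - N $ u $ v)^2 \<le> C / t" using h by simp
    then have "sqrt ((matrix_inv (S + t *\<^sub>R P) $ u $ v - N $ u $ v)^2) \<le> sqrt (C / t)"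
      by (rule real_sqrt_le_mono)
    then show "norm (matrix_inv (S + t *\<^sub>R P) $ u $ v - N $ u $ v) \<le> sqrt (C / t)" by simp
  qed
  have "((\<lambda>t. C / t) \<longlongrightarrow> 0) at_top"
    by (rule tendsto_divide_0[OF tendsto_const filterlim_at_top_imp_at_infinity[OF filterlim_ident]])
  then have "((\<lambda>t. sqrt (C / t)) \<longlongrightarrow> sqrt 0) at_top" by (rule tendsto_real_sqrt)
  then have "((\<lambda>t. sqrt (C / t)) \<longlongrightarrow> 0) at_top" by simp
  then have "((\<lambda>t. matrix_inv (S + t *\<^sub>R P) $ u $ v - N $ u $ v) \<longlongrightarrow> 0) at_top"
    by (rule Lim_null_comparison[OF le])
  then show ?thesis by (rule LIM_zero_cancel)
qed

lemma mat_lim: "((\<lambda>t. matrix_inv (S + t *\<^sub>R P)) \<longlongrightarrow> N) at_top"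
  by (intro vec_tendstoI entry_lim)

lemma N_entry: assumes "i < r" "j < r" "u \<in> G i" "v \<in> G j"
  shows "N$u$v = c i j * s i u * s j v"
proof -
  have ka: "k a $ u = (if a = i then s i u else 0)" if "a < r" for a
    using G_disj[OF assms(1) that _ assms(3)] assms(3) by (auto simp: k_def)
  have kb: "k b $ v = (if b = j then s j v else 0)" if "b < r" for b
    using G_disj[OF assms(2) that _ assms(4)] assms(4) by (auto simp: k_def)
  have "N$u$v = (\<Sum>a<r. \<Sum>b<r. c a b * k a$u * k b$v)" by (simp add: N_def)
  also have "\<dots> = (\<Sum>a<r. if a = i then (\<Sum>b<r. if b = j then c i j * s i u * s j v else 0) else 0)"
  proof (rule sum.cong[OF refl])
    fix a assume "a \<in> {..<r}"
    then have a: "a < r" by simp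
    show "(\<Sum>b<r. c a b * k a$u * k b$v) = (if a = i then (\<Sum>b<r. if b = j then c i j * s i u * s j v else 0) else 0)"
    proof (cases "a = i")
      case True
      then have ku: "k i $ u = s i u" using ka[OF a] by simp
      have "(\<Sum>b<r. c a b * k a$u * k b$v) = (\<Sum>b<r. if b = j then c i j * s i u * s j v else 0)"
        by (rule sum.cong[OF refl]) (simp add: True ku kb)
      then show ?thesis using True by simp
    next
      case False
      then show ?thesis using ka[OF a] by simp
    qed
  qed
  also have "\<dots> = c i j * s i u * s j v" using assms(1,2) by simp
  finally show ?thesis .
qed

end
theorem corollary4p9:
  fixes P :: "real^'n^'n" and l \<alpha> :: real and r :: nat
    and G A B :: "nat \<Rightarrow> 'n set"
  assumes n3: "CARD('n) \<ge> 3"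
    and l_pos: "l > 0"
    and alpha: "\<alpha> \<ge> (real CARD('n) - 2) * l"
    and SL: "signless_laplacian P"
    and G_inj: "inj_on G {..<r}"
    and G_comps: "G ` {..<r} = {C. bipartite_comp P C}"
    and G_bip: "\<forall>i<r. is_bipartition P (G i) (A i) (B i)"
  shows "let S = \<alpha> *\<^sub>R mat 1 + l *\<^sub>R (\<chi> i j. 1 :: real^'n^'n);
             p = (\<lambda>i. real (card (A i))); q = (\<lambda>i. real (card (B i)));
             \<gamma> = (\<Sum>i<r. (p i - q i)^2 / (p i + q i));
             c = (\<lambda>i j. if i = j then
                    l / (\<alpha> * (\<alpha> + l * \<gamma>) * (p i + q i))
                      * (\<alpha> / l + \<gamma> - (p i - q i)^2 / (p i + q i))
                  else
                    (- l) / (\<alpha> * (\<alpha> + l * \<gamma>))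
                      * ((p i - q i) / (p i + q i)) * ((p j - q j) / (p j + q j)));
             s = (\<lambda>i u. if u \<in> A i then (1::real) else -1)
         in \<exists>N. ((\<lambda>t. matrix_inv (S + t *\<^sub>R P)) \<longlongrightarrow> N) at_top
              \<and> (\<forall>i<r. \<forall>j<r. \<forall>u\<in>G i. \<forall>v\<in>G j. N$u$v = c i j * s i u * s j v)"
  proof -
  have "real CARD('n) - 2 \<ge> 1" using n3 by simp
  then have "(real CARD('n) - 2) * l \<ge> 1 * l" using l_pos by (intro mult_right_mono) auto
  then have \<alpha>_pos: "\<alpha> > 0" using alpha l_pos by linarith
  interpret st: setting P l \<alpha> r G A B
    by unfold_locales (use l_pos \<alpha>_pos SL G_inj G_comps G_bip in auto)
  show ?thesis unfolding Let_def
    apply (rule exI[of _ st.N])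
    using st.mat_lim st.N_entry unfolding st.S_def st.c_def st.\<gamma>_def st.m_def st.wt_def st.s_def
    by auto
qed

end
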